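(* Let $\mu\in\mathbb{C}$ with $|\mu|\ge1$, and let $T_\mu$ be the operator on the space $H(\mathbb{C})$ of entire functions (with the compact-open topology) defined by $(T_\mu f)(z)=f'(\mu z)$. Then $T_\mu$ is frequently hypercyclic on $H(\mathbb{C})$.
   Context: An operator $T$ on a separable topological vector space $X$ is frequently hypercyclic if there is $x\in X$ such that for every nonempty open $U\subset X$ the set $A=\{n\in\mathbb{N}:T^nx\in U\}$ has positive lower density $\liminf_{N\to\infty}\mathrm{card}\{n\in A:n\le N\}/N>0$. *)

theory Defs
  imports "HOL-Analysis.Analysis"
begin

definition entire_fns :: "(complex \<Rightarrow> complex) set" where
  "entire_fns = {f. f holomorphic_on UNIV}"

text \<open>Compact-open topology on H(C) (= topology of uniform convergence on compact sets):
  U is open iff every f in U has a neighbourhood {g. sup over K of |g - f| < e} inside U,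
  with K compact and e > 0.\<close>
definition co_open :: "(complex \<Rightarrow> complex) set \<Rightarrow> bool" where
  "co_open U \<longleftrightarrow> U \<subseteq> entire_fns \<and>
     (\<forall>f\<in>U. \<exists>K e. compact K \<and> e > 0 \<and>
        {g \<in> entire_fns. \<forall>z\<in>K. cmod (g z - f z) < e} \<subseteq> U)"

lemma istopology_co_open: "istopology co_open"
  unfolding istopology_def
proof (intro conjI allI impI)
  fix S T assume S: "co_open S" and T: "co_open T"
  show "co_open (S \<inter> T)"
    unfolding co_open_def
  proof (intro conjI ballI)
    show "S \<inter> T \<subseteq> entire_fns" using S unfolding co_open_def by blast
  next
    fix f assume f: "f \<in> S \<inter> T"
    obtain K1 e1 where 1: "compact K1" "e1 > 0"
      "{g \<in> entire_fns. \<forall>z\<in>K1. cmod (g z - f z) < e1} \<subseteq> S"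
      using S f unfolding co_open_def by blast
    obtain K2 e2 where 2: "compact K2" "e2 > 0"
      "{g \<in> entire_fns. \<forall>z\<in>K2. cmod (g z - f z) < e2} \<subseteq> T"
      using T f unfolding co_open_def by blast
    show "\<exists>K e. compact K \<and> e > 0 \<and>
        {g \<in> entire_fns. \<forall>z\<in>K. cmod (g z - f z) < e} \<subseteq> S \<inter> T"
    proof (intro exI conjI)
      show "compact (K1 \<union> K2)" using 1 2 by auto
      show "min e1 e2 > 0" using 1 2 by auto
      show "{g \<in> entire_fns. \<forall>z\<in>K1 \<union> K2. cmod (g z - f z) < min e1 e2} \<subseteq> S \<inter> T"
      proof
        fix g assume g: "g \<in> {g \<in> entire_fns. \<forall>z\<in>K1 \<union> K2. cmod (g z - f z) < min e1 e2}"
        then have "g \<in> {g \<in> entire_fns. \<forall>z\<in>K1. cmod (g z - f z) < e1}" by auto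
        moreover have "g \<in> {g \<in> entire_fns. \<forall>z\<in>K2. cmod (g z - f z) < e2}" using g by auto
        ultimately show "g \<in> S \<inter> T" using 1(3) 2(3) by blast
      qed
    qed
  qed
next
  fix \<K> assume H: "\<forall>K\<in>\<K>. co_open K"
  show "co_open (\<Union>\<K>)"
    unfolding co_open_def
  proof (intro conjI ballI)
    show "\<Union>\<K> \<subseteq> entire_fns" using H unfolding co_open_def by (simp add: Sup_le_iff)
  next
    fix f assume "f \<in> \<Union>\<K>"
    then obtain U where U: "U \<in> \<K>" "f \<in> U" by blast
    have "co_open U" using H U(1) by blast
    then obtain K e where "compact K" "e > 0"
      "{g \<in> entire_fns. \<forall>z\<in>K. cmod (g z - f z) < e} \<subseteq> U"
      using U(2) unfolding co_open_def by blast
    then show "\<exists>K e. compact K \<and> e > 0 \<and>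
        {g \<in> entire_fns. \<forall>z\<in>K. cmod (g z - f z) < e} \<subseteq> \<Union>\<K>"
      using U by blast
  qed
qed

definition H_C :: "(complex \<Rightarrow> complex) topology" where
  "H_C = topology co_open"

definition lower_density :: "nat set \<Rightarrow> ereal" where
  "lower_density A = liminf (\<lambda>N. ereal (real (card {n \<in> A. 1 \<le> n \<and> n \<le> N}) / real N))"

definition frequently_hypercyclic :: "'a topology \<Rightarrow> ('a \<Rightarrow> 'a) \<Rightarrow> bool" where
  "frequently_hypercyclic X T \<longleftrightarrow>
     (\<exists>x\<in>topspace X. \<forall>U. openin X U \<and> U \<noteq> {} \<longrightarrow>
        lower_density {n. (T ^^ n) x \<in> U} > 0)"

definition T_op :: "complex \<Rightarrow> (complex \<Rightarrow> complex) \<Rightarrow> (complex \<Rightarrow> complex)" where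
  "T_op \<mu> f = (\<lambda>z. deriv f (\<mu> * z))"

end

theory Submission
  imports Defs "HOL-Complex_Analysis.Cauchy_Integral_Formula" "HOL-Library.Liminf_Limsup"
begin


fun W :: "complex \<Rightarrow> nat \<Rightarrow> nat \<Rightarrow> complex" where
  "W \<mu> j 0 = 1"
| "W \<mu> j (Suc n) = of_nat (Suc j) * \<mu>^j * W \<mu> (Suc j) n"

lemma W_add: "W \<mu> i (m + n) = W \<mu> i m * W \<mu> (i+m) n"
proof (induction m arbitrary: i)
  case 0 then show ?case by simp
next
  case (Suc m) then show ?case by (simp add: algebra_simps)
qed

lemma W_norm: assumes "norm \<mu> \<ge> 1" shows "fact (i+n) \<le> norm (W \<mu> i n) * fact i"
proof (induction n arbitrary: i)
  case 0 then show ?case by simp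
next
  case (Suc n)
  have IH: "fact (Suc i + n) \<le> norm (W \<mu> (Suc i) n) * fact (Suc i)" by (rule Suc)
  have p: "1 \<le> norm \<mu> ^ i" using assms by (simp add: one_le_power)
  have "fact (i + Suc n) = (fact (Suc i + n) :: real)" by simp
  also have "\<dots> \<le> norm (W \<mu> (Suc i) n) * fact (Suc i)" by (rule IH)
  also have "\<dots> = real (Suc i) * norm (W \<mu> (Suc i) n) * fact i" by (simp add: algebra_simps)
  also have "\<dots> \<le> real (Suc i) * norm \<mu> ^ i * norm (W \<mu> (Suc i) n) * fact i"
    using p by (simp add: mult_right_mono mult_left_mono)
  also have "\<dots> = norm (W \<mu> i (Suc n)) * fact i"
  proof -
    have "norm (of_nat (Suc i) :: complex) = real (Suc i)" by (rule norm_of_nat)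
    then show ?thesis by (simp only: W.simps norm_mult norm_power)
  qed
  finally show ?case .
qed

lemma W_nz: "norm \<mu> \<ge> 1 \<Longrightarrow> W \<mu> i n \<noteq> 0"
  using W_norm[of \<mu> i n] by (metis fact_gt_zero mult_eq_0_iff norm_zero not_le)

lemma W_inv: assumes "norm \<mu> \<ge> 1" shows "1 / norm (W \<mu> i n) \<le> fact i / fact (i+n)"
proof -
  have "norm (W \<mu> i n) > 0" using W_nz[OF assms] by simp
  then show ?thesis using W_norm[OF assms, of i n]
    by (simp add: divide_simps mult.commute)
qed

definition ps :: "(nat \<Rightarrow> complex) \<Rightarrow> complex \<Rightarrow> complex" where
  "ps a z = (\<Sum>n. a n * z^n)"

definition allsum :: "(nat \<Rightarrow> complex) \<Rightarrow> bool" where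
  "allsum a \<longleftrightarrow> (\<forall>z. summable (\<lambda>n. a n * z^n))"

lemma ps_deriv: "allsum a \<Longrightarrow> (ps a has_field_derivative ps (diffs a) w) (at w)"
  unfolding allsum_def ps_def[abs_def] by (rule termdiffs_strong_converges_everywhere) auto

lemma ps_holo: "allsum a \<Longrightarrow> ps a \<in> entire_fns"
  unfolding entire_fns_def using ps_deriv
  by (auto simp: holomorphic_on_def field_differentiable_def intro: has_field_derivative_at_within)

lemma T_ps: assumes "allsum a"
  shows "T_op \<mu> (ps a) = ps (\<lambda>j. diffs a j * \<mu>^j)" "allsum (\<lambda>j. diffs a j * \<mu>^j)"
proof -
  show "T_op \<mu> (ps a) = ps (\<lambda>j. diffs a j * \<mu>^j)"
    unfolding T_op_def
  proof
    fix z
    have "deriv (ps a) (\<mu> * z) = ps (diffs a) (\<mu> * z)" using ps_deriv[OF assms] by (rule DERIV_imp_deriv)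
    then show "deriv (ps a) (\<mu> * z) = ps (\<lambda>j. diffs a j * \<mu>^j) z"
      by (simp add: ps_def power_mult_distrib mult.assoc)
  qed
  show "allsum (\<lambda>j. diffs a j * \<mu>^j)"
    unfolding allsum_def
  proof
    fix z
    have "summable (\<lambda>n. diffs a n * (\<mu>*z)^n)"
      using assms unfolding allsum_def by (intro termdiff_converges_all) auto
    then show "summable (\<lambda>n. diffs a n * \<mu>^n * z^n)" by (simp add: power_mult_distrib mult.assoc)
  qed
qed

lemma T_iter: assumes "allsum c"
  shows "(T_op \<mu> ^^ N) (ps c) = ps (\<lambda>j. c (j+N) * W \<mu> j N) \<and> allsum (\<lambda>j. c (j+N) * W \<mu> j N)"
proof (induction N)
  case 0 then show ?case using assms by simp
next
  case (Suc N)
  have e: "(\<lambda>j. diffs (\<lambda>j. c (j+N) * W \<mu> j N) j * \<mu>^j) = (\<lambda>j. c (j + Suc N) * W \<mu> j (Suc N))"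
    by (auto simp: diffs_def algebra_simps)
  show ?case using Suc T_ps[of "\<lambda>j. c (j+N) * W \<mu> j N" \<mu>] by (simp add: e)
qed



definition q2c :: "rat \<times> rat \<Rightarrow> complex" where
  "q2c p = Complex (of_rat (fst p)) (of_rat (snd p))"

definition poly_of :: "(rat \<times> rat) list \<Rightarrow> complex \<Rightarrow> complex" where
  "poly_of L z = (\<Sum>j<length L. q2c (L!j) * z^j)"

lemma gauss_dense: assumes "e > 0" shows "\<exists>p. norm (w - q2c p) < e"
proof -
  obtain a where a: "a \<in> \<rat>" "Re w - e/2 < a" "a < Re w + e/2"
    using Rats_dense_in_real[of "Re w - e/2" "Re w + e/2"] assms by auto
  obtain b where b: "b \<in> \<rat>" "Im w - e/2 < b" "b < Im w + e/2"
    using Rats_dense_in_real[of "Im w - e/2" "Im w + e/2"] assms by auto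
  obtain a' where a': "a = of_rat a'" using a(1) Rats_cases by blast
  obtain b' where b': "b = of_rat b'" using b(1) Rats_cases by blast
  have "norm (w - q2c (a',b')) \<le> \<bar>Re (w - q2c (a',b'))\<bar> + \<bar>Im (w - q2c (a',b'))\<bar>" by (rule cmod_le)
  also have "\<dots> < e" using a b a' b' by (simp add: q2c_def abs_less_iff)
  finally show ?thesis by blast
qed

lemma approx:
  fixes f :: "complex \<Rightarrow> complex" and R :: real
  assumes hol: "f holomorphic_on UNIV" and d: "\<delta> > 0"
  shows "\<exists>L. \<forall>z. norm z \<le> R \<longrightarrow> norm (f z - poly_of L z) < \<delta>"
proof -
  define a where "a n = (deriv ^^ n) f 0 / fact n" for n
  have sums: "(\<lambda>n. a n * z^n) sums f z" for z
  proof -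
    have "z \<in> ball 0 (norm z + 1)" by simp
    from holomorphic_power_series[OF holomorphic_on_subset[OF hol] this]
    show ?thesis by (simp add: a_def)
  qed
  define R' where "R' = max R 0"
  have sumR: "summable (\<lambda>n. norm (a n) * R'^n)"
  proof -
    have "summable (\<lambda>n. a n * (of_real (R'+1))^n)" using sums sums_summable by blast
    from powser_insidea[OF this, of "of_real R'"]
    moreover have "norm (a n * (of_real R')^n) = norm (a n) * R'^n" for n
      by (simp add: norm_mult norm_power R'_def)
    ultimately show ?thesis by (simp add: R'_def)
  qed
  obtain D where D: "\<forall>n\<ge>D. norm (\<Sum>i. norm (a (i+n)) * R'^(i+n)) < \<delta>/2"
    using suminf_exist_split[OF _ sumR, of "\<delta>/2"] d by auto
  define S where "S = (\<Sum>n<D. R'^n)"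
  have S0: "S \<ge> 0" unfolding S_def R'_def by (intro sum_nonneg) auto
  define \<eta> where "\<eta> = \<delta> / (2 * (S + 1))"
  have eta: "\<eta> > 0" using d S0 by (simp add: \<eta>_def)
  define g where "g n = (SOME p. norm (a n - q2c p) < \<eta>)" for n
  have g: "norm (a n - q2c (g n)) < \<eta>" for n
    unfolding g_def by (rule someI_ex, rule gauss_dense[OF eta])
  define L where "L = map g [0..<D]"
  have poly: "poly_of L z = (\<Sum>n<D. q2c (g n) * z^n)" for z
    unfolding poly_of_def L_def by (intro sum.cong) auto
  show ?thesis
  proof (intro exI allI impI)
    fix z :: complex assume z: "norm z \<le> R"
    then have zR: "norm z \<le> R'" by (simp add: R'_def)
    have sm: "summable (\<lambda>n. a n * z^n)" using sums sums_summable by blast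
    have "f z = (\<Sum>n. a n * z^n)" using sums sums_unique by metis
    also have "\<dots> = (\<Sum>i. a (i+D) * z^(i+D)) + (\<Sum>n<D. a n * z^n)"
      by (rule suminf_split_initial_segment[OF sm])
    finally have fz: "f z - poly_of L z = (\<Sum>i. a (i+D) * z^(i+D)) + (\<Sum>n<D. (a n - q2c (g n)) * z^n)"
      by (simp add: poly sum_subtractf algebra_simps)
    have t1: "norm (\<Sum>i. a (i+D) * z^(i+D)) < \<delta>/2"
    proof -
      have s2: "summable (\<lambda>i. norm (a (i+D)) * R'^(i+D))"
        using sumR by (subst summable_iff_shift) 
      have "norm (\<Sum>i. a (i+D) * z^(i+D)) \<le> (\<Sum>i. norm (a (i+D)) * R'^(i+D))"
      proof (rule norm_suminf_le[OF _ s2])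
        fix i show "norm (a (i+D) * z^(i+D)) \<le> norm (a (i+D)) * R'^(i+D)"
          by (simp add: norm_mult norm_power mult_left_mono power_mono zR)
      qed
      also have "\<dots> \<le> norm (\<Sum>i. norm (a (i+D)) * R'^(i+D))" by simp
      also have "\<dots> < \<delta>/2" using D by simp
      finally show ?thesis .
    qed
    have t2: "norm (\<Sum>n<D. (a n - q2c (g n)) * z^n) \<le> \<eta> * S"
    proof -
      have "norm (\<Sum>n<D. (a n - q2c (g n)) * z^n) \<le> (\<Sum>n<D. norm ((a n - q2c (g n)) * z^n))"
        by (rule norm_sum)
      also have "\<dots> \<le> (\<Sum>n<D. \<eta> * R'^n)"
      proof (rule sum_mono)
        fix n
        have "norm ((a n - q2c (g n)) * z^n) = norm (a n - q2c (g n)) * norm z ^ n"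
          by (simp add: norm_mult norm_power)
        also have "\<dots> \<le> \<eta> * R'^n"
          using g[of n] zR eta by (intro mult_mono power_mono) auto
        finally show "norm ((a n - q2c (g n)) * z^n) \<le> \<eta> * R'^n" .
      qed
      also have "\<dots> = \<eta> * S" by (simp add: S_def sum_distrib_left)
      finally show ?thesis .
    qed
    have "\<eta> * S < \<delta>/2"
    proof -
      have "\<eta> * S = \<delta>/2 * (S/(S+1))" using S0 by (simp add: \<eta>_def field_simps)
      also have "\<dots> < \<delta>/2" using S0 d by (simp add: field_simps)
      finally show ?thesis .
    qed
    then show "norm (f z - poly_of L z) < \<delta>"
      using fz t1 t2 norm_triangle_ineq[of "\<Sum>i. a (i+D) * z^(i+D)" "\<Sum>n<D. (a n - q2c (g n)) * z^n"]
      by (simp only: fz)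
  qed
qed



fun E :: "(nat \<Rightarrow> nat) \<Rightarrow> nat \<Rightarrow> nat" where
  "E \<phi> 0 = \<phi> 0 + 6"
| "E \<phi> (Suc k) = E \<phi> k + \<phi> (Suc k) + 6"

definition P :: "(nat \<Rightarrow> nat) \<Rightarrow> nat \<Rightarrow> nat" where "P \<phi> k = 2 ^ E \<phi> k"
definition B :: "(nat \<Rightarrow> nat) \<Rightarrow> nat \<Rightarrow> nat set" where
  "B \<phi> k = {N. N mod P \<phi> k = P \<phi> k div 2}"
definition close :: "nat \<Rightarrow> nat \<Rightarrow> nat \<Rightarrow> bool" where
  "close r N n \<longleftrightarrow> N \<le> n + r \<and> n \<le> N + r"
definition A :: "(nat \<Rightarrow> nat) \<Rightarrow> nat \<Rightarrow> nat set" where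
  "A \<phi> k = {N \<in> B \<phi> k. \<forall>l>k. \<forall>n\<in>B \<phi> l. \<not> close (\<phi> l) N n}"

lemma E_ge: "E \<phi> k \<ge> \<phi> k + 6" "E \<phi> k \<ge> k + 6"
  by (induction k) auto

lemma E_mono: "l \<le> k \<Longrightarrow> E \<phi> l + (k - l) \<le> E \<phi> k"
proof (induction k)
  case 0 then show ?case by simp
next
  case (Suc k) then show ?case by (cases "l = Suc k") auto
qed

lemma E_gap: assumes "l < k" shows "E \<phi> l + (k - l) + \<phi> k + 5 \<le> E \<phi> k"
proof (cases k)
  case 0 then show ?thesis using assms by simp
next
  case (Suc k')
  then have "l \<le> k'" using assms by simp
  from E_mono[OF this, of \<phi>] show ?thesis using Suc assms by simp
qed

lemma pow_ge: "Suc n \<le> (2::nat)^n"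
  by (induction n) auto

lemma P_props: "P \<phi> k = 2 * (P \<phi> k div 2)" "8 * \<phi> k + 8 \<le> P \<phi> k div 2"
    "2 ^ (k+5) \<le> P \<phi> k div 2"
proof -
  obtain e where e: "E \<phi> k = Suc e" using E_ge(1)[of \<phi> k] by (cases "E \<phi> k") auto
  have Pe: "P \<phi> k = 2 * 2^e" by (simp add: P_def e)
  show "P \<phi> k = 2 * (P \<phi> k div 2)" by (simp add: Pe)
  have "e \<ge> \<phi> k + 3" using E_ge(1)[of \<phi> k] e by simp
  then have "(2::nat)^(\<phi> k + 3) \<le> 2^e" by (intro power_increasing) auto
  moreover have "8 * \<phi> k + 8 \<le> (2::nat)^(\<phi> k + 3)" using pow_ge[of "\<phi> k"] by (simp add: power_add)
  ultimately have "8 * \<phi> k + 8 \<le> (2::nat)^e" by (rule order_trans[rotated])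
  then show "8 * \<phi> k + 8 \<le> P \<phi> k div 2" by (simp add: Pe)
  have "e \<ge> k + 5" using E_ge(2)[where \<phi>=\<phi> and k=k] e by simp
  then have "(2::nat)^(k+5) \<le> 2^e" by (intro power_increasing) auto
  then show "2 ^ (k+5) \<le> P \<phi> k div 2" by (simp add: Pe)
qed

lemma B_ge: "N \<in> B \<phi> k \<Longrightarrow> P \<phi> k div 2 \<le> N"
  unfolding B_def by (metis mem_Collect_eq mod_less_eq_dividend)

lemma A_ge: "N \<in> A \<phi> k \<Longrightarrow> \<phi> k < N"
  using B_ge[of N \<phi> k] P_props(2)[of \<phi> k] unfolding A_def by auto

lemma B_sep: assumes "N \<in> B \<phi> k" "n \<in> B \<phi> k" "N < n" shows "N + P \<phi> k \<le> n"
proof -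
  have "N mod P \<phi> k = n mod P \<phi> k" using assms unfolding B_def by simp
  then have "P \<phi> k dvd n - N" using assms(3) mod_eq_dvd_iff_nat[of N n "P \<phi> k"] by simp
  moreover have "n - N > 0" using assms(3) by simp
  ultimately have "P \<phi> k \<le> n - N" by (simp add: dvd_imp_le)
  then show ?thesis using assms(3) by simp
qed

lemma A_sep_le: assumes "mono \<phi>" "N \<in> A \<phi> k" "n \<in> A \<phi> l" "N \<noteq> n" "k \<le> l"
  shows "N + \<phi> l < n \<or> n + \<phi> l < N"
proof (cases "k = l")
  case True
  have "N \<in> B \<phi> k" "n \<in> B \<phi> k" using assms True unfolding A_def by auto
  moreover have "\<phi> k < P \<phi> k"
  proof -
    have "8 * \<phi> k + 8 \<le> P \<phi> k div 2" "P \<phi> k = 2 * (P \<phi> k div 2)" using P_props by auto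
    then show ?thesis by presburger
  qed
  ultimately show ?thesis using B_sep[of N \<phi> k n] B_sep[of n \<phi> k N] assms(4) True
    by (cases "N < n") auto
next
  case False
  then have "k < l" using assms by simp
  moreover have "n \<in> B \<phi> l" using assms unfolding A_def by auto
  ultimately have "\<not> close (\<phi> l) N n" using assms(2) unfolding A_def by auto
  then show ?thesis unfolding close_def by auto
qed

lemma A_sep: assumes "mono \<phi>" "N \<in> A \<phi> k" "n \<in> A \<phi> l" "N \<noteq> n"
  shows "(N + \<phi> l < n \<or> n + \<phi> l < N) \<and> (N + \<phi> k < n \<or> n + \<phi> k < N)"
proof (cases "k \<le> l")
  case True
  have 1: "N + \<phi> l < n \<or> n + \<phi> l < N" using A_sep_le[OF assms True] .
  have "\<phi> k \<le> \<phi> l" using assms(1) True by (simp add: mono_def)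
  then show ?thesis using 1 by auto
next
  case False
  have 1: "n + \<phi> k < N \<or> N + \<phi> k < n" using A_sep_le[OF assms(1,3,2) _] assms(4) False by auto
  have "\<phi> l \<le> \<phi> k" using assms(1) False by (simp add: mono_def)
  then show ?thesis using 1 by auto
qed

lemma A_disj: assumes "N \<in> A \<phi> k" "N \<in> A \<phi> l" shows "k = l"
proof (rule ccontr)
  assume "k \<noteq> l"
  then consider "k < l" | "l < k" by linarith
  then show False
  proof cases
    case 1
    have "N \<in> B \<phi> l" using assms(2) unfolding A_def by auto
    then have "\<not> close (\<phi> l) N N" using assms(1) 1 unfolding A_def by auto
    then show False unfolding close_def by auto
  next
    case 2
    have "N \<in> B \<phi> k" using assms(1) unfolding A_def by auto
    then have "\<not> close (\<phi> k) N N" using assms(2) 2 unfolding A_def by auto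
    then show False unfolding close_def by auto
  qed
qed

lemma geom: "(\<Sum>k\<in>{l<..<M}. (1/2::real)^(k-l)) \<le> 1 - (1/2)^(M-l-1)"
proof (induction M)
  case 0 then show ?case by simp
next
  case (Suc M)
  show ?case
  proof (cases "l < M")
    case True
    have "{l<..<Suc M} = insert M {l<..<M}" using True by auto
    then have "(\<Sum>k\<in>{l<..<Suc M}. (1/2::real)^(k-l)) = (1/2)^(M-l) + (\<Sum>k\<in>{l<..<M}. (1/2::real)^(k-l))"
      by simp
    also have "\<dots> \<le> (1/2)^(M-l) + 1 - (1/2)^(M-l-1)" using Suc by simp
    also have "\<dots> = 1 - (1/2)^(Suc M - l - 1)"
    proof -
      have "M - l = Suc (M - l - 1)" using True by simp
      then have "(1/2::real)^(M-l) = (1/2)^(M-l-1) / 2" by (metis power_Suc2 divide_inverse inverse_eq_divide mult.commute mult_1 times_divide_eq_right)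
      moreover have "Suc M - l - 1 = M - l" by simp
      ultimately show ?thesis by simp
    qed
    finally show ?thesis .
  next
    case False
    then have "{l<..<Suc M} = {}" by auto
    moreover have "Suc M - l - 1 = 0" using False by simp
    ultimately show ?thesis by simp
  qed
qed

lemma card_B: "M div P \<phi> l \<le> card {N\<in>B \<phi> l. 1 \<le> N \<and> N \<le> M}"
proof -
  define Q where "Q = P \<phi> l"
  have Q2: "Q = 2 * (Q div 2)" "Q div 2 \<ge> 1" using P_props[where \<phi>=\<phi> and k=l] unfolding Q_def by auto
  have sub: "(\<lambda>t. Q*t + Q div 2) ` {..<M div Q} \<subseteq> {N\<in>B \<phi> l. 1 \<le> N \<and> N \<le> M}"
  proof
    fix x assume "x \<in> (\<lambda>t. Q*t + Q div 2) ` {..<M div Q}"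
    then obtain t where t: "t < M div Q" "x = Q*t + Q div 2" by auto
    have "x mod Q = Q div 2" using Q2 t(2) by (simp add: mod_mult_self3)
    moreover have "x \<le> M"
    proof -
      have "Q * (t+1) \<le> Q * (M div Q)" using t(1) by (intro mult_left_mono) auto
      also have "\<dots> \<le> M" by simp
      finally show ?thesis using t(2) Q2 by simp
    qed
    ultimately show "x \<in> {N\<in>B \<phi> l. 1 \<le> N \<and> N \<le> M}" using Q2 t unfolding B_def Q_def by auto
  qed
  have inj: "inj_on (\<lambda>t. Q*t + Q div 2) {..<M div Q}"
    using Q2 by (intro inj_onI) auto
  have "M div Q = card ((\<lambda>t. Q*t + Q div 2) ` {..<M div Q})" using card_image[OF inj] by simp
  also have "\<dots> \<le> card {N\<in>B \<phi> l. 1 \<le> N \<and> N \<le> M}" by (rule card_mono[OF _ sub]) auto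
  finally show ?thesis unfolding Q_def .
qed

lemma Nb_nonempty: assumes "N \<le> M" "n \<in> B \<phi> k" "close (\<phi> k) N n"
  shows "P \<phi> k \<le> 4 * M" "n \<le> 2 * M" "k < M"
proof -
  have H: "P \<phi> k = 2 * (P \<phi> k div 2)" "8 * \<phi> k + 8 \<le> P \<phi> k div 2" "2^(k+5) \<le> P \<phi> k div 2"
    using P_props by auto
  have n: "P \<phi> k div 2 \<le> n" using B_ge[OF assms(2)] .
  have c: "n \<le> N + \<phi> k" using assms(3) unfolding close_def by auto
  obtain h where h: "P \<phi> k div 2 = h" by simp
  obtain t where t: "(2::nat)^(k+5) = t" by simp
  note HH = H[unfolded h t] n[unfolded h]
  show "P \<phi> k \<le> 4 * M" using HH c assms(1) by linarith
  show "n \<le> 2 * M" using HH c assms(1) by linarith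
  have "(2::nat)^(k+5) \<le> 2 * M" unfolding t using HH c assms(1) by linarith
  moreover have "k < 2^k" by (rule less_exp)
  moreover have "(2::nat)^(k+5) = 32 * 2^k" by (simp add: power_add)
  ultimately show "k < M" by linarith
qed

lemma Nb_card: "card {N. 1 \<le> N \<and> N \<le> M \<and> (\<exists>n\<in>B \<phi> k. close (\<phi> k) N n)} \<le> (2*M div P \<phi> k + 1) * (2 * \<phi> k + 1)"
proof -
  define p where "p = P \<phi> k"
  define f where "f t = {p*t + p div 2 - \<phi> k .. p*t + p div 2 + \<phi> k}" for t
  have sub: "{N. 1 \<le> N \<and> N \<le> M \<and> (\<exists>n\<in>B \<phi> k. close (\<phi> k) N n)} \<subseteq> (\<Union>t\<in>{..2*M div p}. f t)"
  proof
    fix N assume "N \<in> {N. 1 \<le> N \<and> N \<le> M \<and> (\<exists>n\<in>B \<phi> k. close (\<phi> k) N n)}"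
    then obtain n where N: "N \<le> M" "n \<in> B \<phi> k" "close (\<phi> k) N n" by auto
    have n2: "n \<le> 2 * M" using Nb_nonempty[OF N] by simp
    have nm: "n mod p = p div 2" using N(2) unfolding B_def p_def by simp
    have ne: "n = p * (n div p) + p div 2" using nm by (metis div_mult_mod_eq mult.commute)
    have "n div p \<le> 2*M div p" using n2 by (rule div_le_mono)
    moreover have "N \<in> f (n div p)" using N(3) ne unfolding f_def close_def
      by (metis (no_types, lifting) add.commute atLeastAtMost_iff le_diff_conv)
    ultimately show "N \<in> (\<Union>t\<in>{..2*M div p}. f t)" by auto
  qed
  have "card {N. 1 \<le> N \<and> N \<le> M \<and> (\<exists>n\<in>B \<phi> k. close (\<phi> k) N n)} \<le> card (\<Union>t\<in>{..2*M div p}. f t)"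
    by (rule card_mono[OF _ sub]) (auto simp: f_def)
  also have "\<dots> \<le> (\<Sum>t\<in>{..2*M div p}. card (f t))" by (rule card_UN_le) auto
  also have "\<dots> \<le> (\<Sum>t\<in>{..2*M div p}. 2 * \<phi> k + 1)" by (intro sum_mono) (auto simp: f_def)
  also have "\<dots> = (2*M div p + 1) * (2 * \<phi> k + 1)" by simp
  finally show ?thesis unfolding p_def .
qed

lemma P_gap: assumes "l < k" shows "2^(k-l) * 12 * (2 * \<phi> k + 1) * P \<phi> l \<le> P \<phi> k"
proof -
  have e: "E \<phi> l + (k - l) + \<phi> k + 5 \<le> E \<phi> k" by (rule E_gap[OF assms])
  have "12 * (2 * \<phi> k + 1) \<le> (32::nat) * 2^\<phi> k"
  proof -
    obtain t where t: "(2::nat)^\<phi> k = t" by simp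
    show ?thesis using pow_ge[of "\<phi> k"] unfolding t by simp
  qed
  then have "2^(k-l) * (12 * (2 * \<phi> k + 1)) * P \<phi> l \<le> 2^(k-l) * (32 * 2^\<phi> k) * 2^(E \<phi> l)"
    unfolding P_def by (intro mult_right_mono mult_left_mono) auto
  then have "2^(k-l) * 12 * (2 * \<phi> k + 1) * P \<phi> l \<le> 2^(k-l) * (32 * 2^\<phi> k) * 2^(E \<phi> l)"
    by (simp only: mult.assoc)
  also have "\<dots> = (2::nat)^(E \<phi> l + (k - l) + \<phi> k + 5)" by (simp add: power_add)
  also have "\<dots> \<le> 2^(E \<phi> k)" using e by (intro power_increasing) auto
  finally show ?thesis unfolding P_def .
qed

lemma aux_div: "(a::real) > 0 \<Longrightarrow> (t::real) > 0 \<Longrightarrow> (q::real) > 0 \<Longrightarrow> 6 * m * a / (t * 12 * a * q) = m / (2 * q) * (1 / t)"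
  by (simp add: divide_simps)

lemma A_density: "\<exists>c>0. \<exists>M0. \<forall>M\<ge>M0. c * real M \<le> real (card {N\<in>A \<phi> l. 1 \<le> N \<and> N \<le> M})"
proof (intro exI conjI allI impI)
  define Q where "Q = P \<phi> l"
  have Q0: "Q > 0" unfolding Q_def P_def by simp
  show "1 / (4 * real Q) > 0" using Q0 by simp
  fix M assume M: "M \<ge> 4 * Q"
  define S where "S = {N\<in>A \<phi> l. 1 \<le> N \<and> N \<le> M}"
  define Bm where "Bm = {N\<in>B \<phi> l. 1 \<le> N \<and> N \<le> M}"
  define Nb where "Nb k = {N. 1 \<le> N \<and> N \<le> M \<and> (\<exists>n\<in>B \<phi> k. close (\<phi> k) N n)}" for k
  have sub: "Bm \<subseteq> S \<union> (\<Union>k\<in>{l<..<M}. Nb k)"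
  proof
    fix N assume N: "N \<in> Bm"
    show "N \<in> S \<union> (\<Union>k\<in>{l<..<M}. Nb k)"
    proof (cases "N \<in> A \<phi> l")
      case True then show ?thesis using N unfolding S_def Bm_def by auto
    next
      case False
      then obtain k n where kn: "k > l" "n \<in> B \<phi> k" "close (\<phi> k) N n"
        using N unfolding A_def Bm_def by auto
      have "k < M" using Nb_nonempty(3)[OF _ kn(2,3)] N unfolding Bm_def by auto
      then show ?thesis using kn N unfolding Nb_def Bm_def by auto
    qed
  qed
  have fin: "finite S" "finite (\<Union>k\<in>{l<..<M}. Nb k)" unfolding S_def Nb_def by auto
  have "card Bm \<le> card (S \<union> (\<Union>k\<in>{l<..<M}. Nb k))" by (rule card_mono[OF _ sub]) (use fin in auto)
  also have "\<dots> \<le> card S + card (\<Union>k\<in>{l<..<M}. Nb k)" by (rule card_Un_le)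
  also have "\<dots> \<le> card S + (\<Sum>k\<in>{l<..<M}. card (Nb k))" using card_UN_le[of "{l<..<M}" Nb] by simp
  finally have c1': "card Bm \<le> card S + (\<Sum>k\<in>{l<..<M}. card (Nb k))" .
  have c1: "real (card Bm) \<le> real (card S) + (\<Sum>k\<in>{l<..<M}. real (card (Nb k)))"
    using c1' unfolding of_nat_sum[symmetric] of_nat_add[symmetric] of_nat_le_iff .
  have each: "real (card (Nb k)) \<le> real M / (2 * Q) * (1/2)^(k-l)" if k: "k \<in> {l<..<M}" for k
  proof (cases "Nb k = {}")
    case True then show ?thesis by simp
  next
    case False
    then obtain N n where N: "N \<le> M" "n \<in> B \<phi> k" "close (\<phi> k) N n" unfolding Nb_def by auto
    have p4: "P \<phi> k \<le> 4 * M" using Nb_nonempty[OF N] by simp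
    define p where "p = real (P \<phi> k)"
    have p0: "p > 0" unfolding p_def P_def by simp
    have "real (card (Nb k)) \<le> real ((2*M div P \<phi> k + 1) * (2 * \<phi> k + 1))"
      using Nb_card[of M \<phi> k] unfolding Nb_def by linarith
    also have "\<dots> = (real (2*M div P \<phi> k) + 1) * (2 * real (\<phi> k) + 1)" by (simp only: of_nat_mult of_nat_add of_nat_1 of_nat_numeral)
    also have "\<dots> \<le> (6 * real M / p) * (2 * real (\<phi> k) + 1)"
    proof (rule mult_right_mono)
      have "real (2*M div P \<phi> k) \<le> real (2*M) / p" unfolding p_def by (rule of_nat_div_le_of_nat)
      moreover have "1 \<le> 4 * real M / p" using p4 p0 unfolding p_def by (simp add: field_simps)
      moreover have "6 * real M / p = 2*real M/p + 4*real M/p" using p0 by (simp add: field_simps)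
      ultimately show "real (2*M div P \<phi> k) + 1 \<le> 6 * real M / p" by simp
    qed auto
    also have "\<dots> \<le> real M / (2 * Q) * (1/2)^(k-l)"
    proof -
      have g: "real (2^(k-l) * 12 * (2 * \<phi> k + 1) * Q) \<le> p"
        using P_gap[of l k \<phi>] k unfolding p_def Q_def by (simp only: of_nat_le_iff) auto
      have "(6 * real M / p) * (2 * real (\<phi> k) + 1) = 6 * real M * (2 * real (\<phi> k) + 1) / p" by simp
      also have "\<dots> \<le> 6 * real M * (2 * real (\<phi> k) + 1) / real (2^(k-l) * 12 * (2 * \<phi> k + 1) * Q)"
      proof (rule divide_left_mono[OF g])
        have "2^(k-l) * 12 * (2 * \<phi> k + 1) * Q > 0" using Q0 by simp
        then have "real (2^(k-l) * 12 * (2 * \<phi> k + 1) * Q) > 0" by (simp only: of_nat_0_less_iff)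
        then show "0 < p * real (2^(k-l) * 12 * (2 * \<phi> k + 1) * Q)" using p0 by simp
      qed simp
      also have "\<dots> = real M / (2 * Q) * (1/2)^(k-l)"
      proof -
        define a where "a = 2 * real (\<phi> k) + 1"
        define t where "t = (2::real)^(k-l)"
        note a = a_def[symmetric] and t = t_def[symmetric]
        have a0: "a > 0" unfolding a_def by (simp add: add_nonneg_pos)
        have t0: "t > 0" unfolding t_def by simp
        have 1: "real (2^(k-l) * 12 * (2 * \<phi> k + 1) * Q) = t * 12 * a * real Q" unfolding a_def t_def by (simp only: of_nat_mult of_nat_add of_nat_numeral of_nat_1 of_nat_power)
        have 2: "(1/2::real)^(k-l) = 1 / t" using t by (simp add: power_one_over)
        have Q0': "real Q > 0" using Q0 by simp
        have "6 * real M * a / (t * 12 * a * real Q) = real M / (2 * real Q) * (1 / t)"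
          using a0 t0 Q0' by (rule aux_div)
        then show ?thesis unfolding 1 2 a by (simp only: of_nat_mult of_nat_numeral)
      qed
      finally show ?thesis .
    qed
    finally show ?thesis .
  qed
  have "(\<Sum>k\<in>{l<..<M}. real (card (Nb k))) \<le> (\<Sum>k\<in>{l<..<M}. real M / (2 * Q) * (1/2)^(k-l))"
    by (rule sum_mono) (rule each)
  also have "\<dots> = real M / (2 * Q) * (\<Sum>k\<in>{l<..<M}. (1/2)^(k-l))" by (simp add: sum_distrib_left)
  also have "\<dots> \<le> real M / (2 * Q) * 1"
  proof (rule mult_left_mono)
    have "(0::real) \<le> (1/2)^(M-l-1)" by simp
    then show "(\<Sum>k\<in>{l<..<M}. (1/2::real)^(k-l)) \<le> 1" using geom[of l M] by linarith
  qed simp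
  finally have c2: "(\<Sum>k\<in>{l<..<M}. real (card (Nb k))) \<le> real M / (2 * Q)" by simp
  have c3: "real M / Q - 1 \<le> real (card Bm)"
  proof -
    have "M div Q \<le> card Bm" using card_B[of M \<phi> l] unfolding Bm_def Q_def .
    moreover have "real M / Q - 1 \<le> real (M div Q)"
    proof -
      have "M = Q * (M div Q) + M mod Q" by simp
      moreover have "M mod Q < Q" using Q0 by simp
      moreover have "Q * (M div Q + 1) = Q * (M div Q) + Q" by simp
      ultimately have "M < Q * (M div Q + 1)" by linarith
      then have "real M < real Q * (real (M div Q) + 1)"
        by (metis of_nat_1 of_nat_add of_nat_less_iff of_nat_mult)
      then have "real M / real Q < real (M div Q) + 1" using Q0 by (simp add: divide_less_eq mult.commute)
      then show ?thesis by linarith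
    qed
    ultimately show ?thesis by linarith
  qed
  have "real (4 * Q) \<le> real M" using M by (simp only: of_nat_le_iff)
  then have "1 \<le> real M / (4 * Q)" using Q0 by (simp add: le_divide_eq)
  moreover have "real M / (2*Q) = 2 * (real M / (4*Q))" "real M / Q = 4 * (real M / (4*Q))" using Q0 by (auto simp: divide_simps)
  moreover have "1 / (4 * real Q) * real M = real M / (4 * Q)" by simp
  ultimately have "1 / (4 * real Q) * real M \<le> real (card S)" using c1 c2 c3 by linarith
  then show "1 / (4 * real Q) * real M \<le> real (card {N\<in>A \<phi> l. 1 \<le> N \<and> N \<le> M})" unfolding S_def .
qed




definition tgt :: "nat \<Rightarrow> (rat \<times> rat) list \<times> nat" where "tgt k = from_nat k"
definition Lk :: "nat \<Rightarrow> (rat \<times> rat) list" where "Lk k = fst (tgt k)"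
definition Rk :: "nat \<Rightarrow> nat" where "Rk k = snd (tgt k)"
definition dk :: "nat \<Rightarrow> nat" where "dk k = length (Lk k)"
definition bk :: "nat \<Rightarrow> nat \<Rightarrow> complex" where "bk k i = (if i < dk k then q2c (Lk k ! i) else 0)"
definition epsk :: "nat \<Rightarrow> real" where "epsk k = 1 / (real (Rk k) + 1)"

definition Phi :: "nat \<Rightarrow> nat \<Rightarrow> bool" where
  "Phi k J \<longleftrightarrow> dk k \<le> J \<and> (\<forall>i. norm (bk k i) * fact i \<le> 2^J) \<and>
     (\<Sum>j. (2 * real (Rk k))^(j+J+1) / fact (j+J+1)) < epsk k"

definition psi :: "nat \<Rightarrow> nat" where "psi k = (SOME J0. \<forall>J\<ge>J0. Phi k J)"
definition phi :: "nat \<Rightarrow> nat" where "phi k = (\<Sum>i\<le>k. psi i)"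

lemma summable_expr: "summable (\<lambda>n. (x::real)^n / fact n)"
  using summable_exp[of x] by (simp add: field_simps)

lemma psi_ex: "\<exists>J0. \<forall>J\<ge>J0. Phi k J"
proof -
  define C where "C = (\<Sum>i<dk k. norm (bk k i) * fact i)"
  obtain J1 :: nat where J1: "C \<le> real J1" using real_arch_simple by blast
  have ep: "epsk k > 0" unfolding epsk_def by simp
  obtain J2 where J2: "\<forall>n\<ge>J2. norm (\<Sum>i. (2 * real (Rk k))^(i+n) / fact (i+n)) < epsk k"
    using suminf_exist_split[OF ep summable_expr] by blast
  show ?thesis
  proof (intro exI allI impI)
    fix J assume J: "J \<ge> max (dk k) (max J1 J2)"
    have "dk k \<le> J" using J by simp
    moreover have "norm (bk k i) * fact i \<le> 2^J" for i
    proof (cases "i < dk k")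
      case True
      have "norm (bk k i) * fact i \<le> C" unfolding C_def
        using True by (intro member_le_sum) auto
      also have "\<dots> \<le> real J" using J1 J by linarith
      also have "\<dots> \<le> 2^J"
      proof -
        have "J < 2^J" by (rule less_exp)
        then show ?thesis by (metis less_imp_le of_nat_le_iff of_nat_numeral of_nat_power)
      qed
      finally show ?thesis .
    next
      case False then show ?thesis by (simp add: bk_def)
    qed
    moreover have "(\<Sum>j. (2 * real (Rk k))^(j+J+1) / fact (j+J+1)) < epsk k"
    proof -
      have "J+1 \<ge> J2" using J by simp
      from J2[rule_format, OF this]
      have h: "\<bar>\<Sum>i. (2 * real (Rk k))^(i+(J+1)) / fact (i+(J+1))\<bar> < epsk k" by (simp only: real_norm_def)
      have e: "(\<lambda>j. (2 * real (Rk k))^(j+J+1) / fact (j+J+1)) = (\<lambda>i. (2 * real (Rk k))^(i+(J+1)) / fact (i+(J+1)))"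
        by (simp only: add.assoc)
      have "(\<Sum>i. (2 * real (Rk k))^(i+(J+1)) / fact (i+(J+1))) \<le> \<bar>\<Sum>i. (2 * real (Rk k))^(i+(J+1)) / fact (i+(J+1))\<bar>"
        by (rule abs_ge_self)
      then show ?thesis unfolding e using h by linarith
    qed
    ultimately show "Phi k J" unfolding Phi_def by blast
  qed
qed

lemma phi_mono: "mono phi"
  unfolding mono_def phi_def by (auto intro!: sum_mono2)

lemma Phi_phi: "Phi k (phi k)"
proof -
  have "psi k \<le> phi k" unfolding phi_def by (intro member_le_sum) auto
  moreover have "\<forall>J\<ge>psi k. Phi k J" unfolding psi_def by (rule someI_ex[OF psi_ex])
  ultimately show ?thesis by blast
qed

lemma dk_phi: "dk k \<le> phi k" using Phi_phi unfolding Phi_def by blast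
lemma bk_phi: "norm (bk k i) * fact i \<le> 2 ^ phi k" using Phi_phi unfolding Phi_def by blast
lemma tail_phi: "(\<Sum>j. (2 * real (Rk k))^(j + phi k + 1) / fact (j + phi k + 1)) < epsk k"
  using Phi_phi unfolding Phi_def by blast

abbreviation AS where "AS \<equiv> A phi"

definition br :: "nat \<Rightarrow> nat \<times> nat \<times> nat \<Rightarrow> bool" where
  "br j t \<longleftrightarrow> (case t of (k,n,i) \<Rightarrow> n \<in> AS k \<and> i < dk k \<and> j = n + i)"

definition coef :: "complex \<Rightarrow> nat \<Rightarrow> complex" where
  "coef \<mu> j = (if \<exists>t. br j t then (case THE t. br j t of (k,n,i) \<Rightarrow> bk k i / W \<mu> i n) else 0)"

lemma before: assumes "n \<in> AS k" "n' \<in> AS l" "n' < n" "i < dk l" shows "n' + i < n"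
proof -
  have "n' + phi l < n" using A_sep[OF phi_mono assms(2,1)] assms(3) by auto
  then show ?thesis using assms(4) dk_phi[of l] by linarith
qed

lemma br_unique: assumes "br j (k,n,i)" "br j (k',n',i')" shows "(k,n,i) = (k',n',i')"
proof -
  have a: "n \<in> AS k" "i < dk k" "j = n + i" "n' \<in> AS k'" "i' < dk k'" "j = n' + i'"
    using assms unfolding br_def by auto
  have "n = n'"
  proof (rule ccontr)
    assume "n \<noteq> n'"
    then consider "n < n'" | "n' < n" by linarith
    then show False
    proof cases
      case 1 then show False using before[of n' k' n k i] a by linarith
    next
      case 2 then show False using before[of n k n' k' i'] a by linarith
    qed
  qed
  moreover then have "k = k'" using A_disj a by blast
  ultimately show ?thesis using a by simp
qed

lemma coef_at: assumes "n \<in> AS k" "i < dk k" shows "coef \<mu> (n+i) = bk k i / W \<mu> i n"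
proof -
  have b: "br (n+i) (k,n,i)" using assms unfolding br_def by simp
  have u: "t = (k,n,i)" if "br (n+i) t" for t
  proof -
    obtain x y z where t: "t = (x,y,z)" by (cases t)
    show ?thesis using br_unique[OF b, of x y z] that t by simp
  qed
  have "(THE t. br (n+i) t) = (k,n,i)"
    by (rule the_equality[where P="br (n+i)", OF b u])
  then show ?thesis using b unfolding coef_def by auto
qed

lemma coef_none: "\<not> (\<exists>t. br j t) \<Longrightarrow> coef \<mu> j = 0"
  unfolding coef_def by simp

lemma two_pow_le: "phi k \<le> j \<Longrightarrow> (2::real) ^ phi k \<le> 2 ^ j"
  by (rule power_increasing) auto

lemma coef_bound: assumes mu: "norm \<mu> \<ge> 1" shows "norm (coef \<mu> j) \<le> 2^j / fact j"
proof (cases "\<exists>t. br j t")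
  case False then show ?thesis using coef_none[OF False] by simp
next
  case True
  then obtain k n i where b: "br j (k,n,i)" by auto
  then have a: "n \<in> AS k" "i < dk k" "j = n + i" unfolding br_def by auto
  have "norm (coef \<mu> j) = norm (bk k i) * (1 / norm (W \<mu> i n))"
    using coef_at[OF a(1,2)] a(3) by (simp add: norm_divide)
  also have "\<dots> \<le> norm (bk k i) * (fact i / fact (i+n))"
    by (intro mult_left_mono W_inv[OF mu]) auto
  also have "\<dots> = norm (bk k i) * fact i / fact j" using a(3) by (simp add: add.commute)
  also have "\<dots> \<le> 2 ^ phi k / fact j" using bk_phi[of k i] by (intro divide_right_mono) auto
  also have "\<dots> \<le> 2 ^ j / fact j"
    using A_ge[OF a(1)] a(3) by (intro divide_right_mono two_pow_le) auto
  finally show ?thesis .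
qed

lemma allsum_coef: assumes mu: "norm \<mu> \<ge> 1" shows "allsum (coef \<mu>)"
  unfolding allsum_def
proof
  fix z :: complex
  show "summable (\<lambda>n. coef \<mu> n * z^n)"
  proof (rule summable_comparison_test'[OF summable_expr[of "2 * norm z"]])
    fix n
    have "norm (coef \<mu> n * z^n) = norm (coef \<mu> n) * norm z ^ n" by (simp add: norm_mult norm_power)
    also have "\<dots> \<le> 2^n / fact n * norm z ^ n" by (intro mult_right_mono coef_bound[OF mu]) auto
    also have "\<dots> = (2 * norm z)^n / fact n" by (simp add: power_mult_distrib)
    finally show "norm (coef \<mu> n * z^n) \<le> (2 * norm z)^n / fact n" .
  qed
qed



lemma gcoef: assumes mu: "norm \<mu> \<ge> 1" and N: "N \<in> AS k"
  shows "coef \<mu> (j+N) * W \<mu> j N - bk k j = 0 \<or>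
         (phi k < j \<and> norm (coef \<mu> (j+N) * W \<mu> j N - bk k j) \<le> 2^j / fact j)"
proof (cases "j < dk k")
  case True
  have "coef \<mu> (j+N) = bk k j / W \<mu> j N" using coef_at[OF N True] by (simp add: add.commute)
  then show ?thesis using W_nz[OF mu, of j N] by simp
next
  case False
  then have b0: "bk k j = 0" by (simp add: bk_def)
  show ?thesis
  proof (cases "\<exists>t. br (j+N) t")
    case False then show ?thesis using coef_none[OF False] b0 by simp
  next
    case True
    then obtain l n' i where "br (j+N) (l,n',i)" by auto
    then have a: "n' \<in> AS l" "i < dk l" "j + N = n' + i" unfolding br_def by auto
    have ne: "n' \<noteq> N"
    proof
      assume "n' = N"
      then have "l = k" using A_disj a(1) N by blast
      then show False using a \<open>n' = N\<close> False by simp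
    qed
    have nlt: "\<not> n' < N" using before[OF N a(1) _ a(2)] a(3) by auto
    then have gt: "N < n'" using ne by linarith
    have sep: "N + phi l < n'" "N + phi k < n'" using A_sep[OF phi_mono N a(1)] ne gt by auto
    define m where "m = n' - N"
    have nm: "n' = m + N" using gt unfolding m_def by simp
    have jm: "j = i + m" using a(3) nm by simp
    have c: "coef \<mu> (j+N) = bk l i / W \<mu> i n'" using coef_at[OF a(1,2)] a(3) by simp
    have w: "W \<mu> i n' = W \<mu> i m * W \<mu> j N" unfolding nm jm by (rule W_add)
    have g: "coef \<mu> (j+N) * W \<mu> j N - bk k j = bk l i / W \<mu> i m"
      using W_nz[OF mu, of j N] W_nz[OF mu, of i m] unfolding c w b0 by (simp add: field_simps)
    have "norm (bk l i / W \<mu> i m) = norm (bk l i) * (1 / norm (W \<mu> i m))" by (simp add: norm_divide)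
    also have "\<dots> \<le> norm (bk l i) * (fact i / fact (i+m))"
      by (intro mult_left_mono W_inv[OF mu]) auto
    also have "\<dots> = norm (bk l i) * fact i / fact j" using jm by simp
    also have "\<dots> \<le> 2 ^ phi l / fact j" using bk_phi[of l i] by (intro divide_right_mono) auto
    also have "\<dots> \<le> 2 ^ j / fact j"
      using sep(1) nm jm by (intro divide_right_mono two_pow_le) auto
    finally have "norm (coef \<mu> (j+N) * W \<mu> j N - bk k j) \<le> 2^j / fact j" unfolding g .
    moreover have "phi k < j" using sep(2) nm jm by simp
    ultimately show ?thesis by blast
  qed
qed

lemma poly_bk: "poly_of (Lk k) z = (\<Sum>j<dk k. bk k j * z^j)"
  unfolding poly_of_def dk_def bk_def by (intro sum.cong) auto

lemma tail: assumes mu: "norm \<mu> \<ge> 1" and N: "N \<in> AS k" and z: "norm z \<le> real (Rk k)"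
  shows "norm (ps (\<lambda>j. coef \<mu> (j+N) * W \<mu> j N) z - poly_of (Lk k) z) < epsk k"
proof -
  define a where "a j = coef \<mu> (j+N) * W \<mu> j N" for j
  define g where "g j = a j - bk k j" for j
  define R where "R = real (Rk k)"
  define J where "J = phi k + 1"
  have all: "allsum a" using T_iter[OF allsum_coef[OF mu], where \<mu>=\<mu> and N=N] unfolding a_def by blast
  have s1: "(\<lambda>j. a j * z^j) sums ps a z" unfolding ps_def
    using all unfolding allsum_def by (simp add: summable_sums)
  have s2: "(\<lambda>j. bk k j * z^j) sums poly_of (Lk k) z" unfolding poly_bk
    by (rule sums_finite) (auto simp: bk_def)
  have s3: "(\<lambda>j. g j * z^j) sums (ps a z - poly_of (Lk k) z)"
    using sums_diff[OF s1 s2] unfolding g_def by (simp add: algebra_simps)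
  have gz: "g j = 0 \<or> (phi k < j \<and> norm (g j) \<le> 2^j / fact j)" for j
    using gcoef[OF mu N, of j] unfolding g_def a_def .
  have sm: "summable (\<lambda>j. g j * z^j)" using s3 sums_summable by blast
  have "ps a z - poly_of (Lk k) z = (\<Sum>j. g j * z^j)" using s3 sums_unique by metis
  also have "\<dots> = (\<Sum>i. g (i+J) * z^(i+J)) + (\<Sum>j<J. g j * z^j)"
    by (rule suminf_split_initial_segment[OF sm])
  also have "(\<Sum>j<J. g j * z^j) = 0"
  proof (rule sum.neutral, rule ballI)
    fix j assume "j \<in> {..<J}"
    then have "\<not> phi k < j" unfolding J_def by simp
    then show "g j * z^j = 0" using gz[of j] by auto
  qed
  finally have eq: "ps a z - poly_of (Lk k) z = (\<Sum>i. g (i+J) * z^(i+J))" by simp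
  have sumb: "summable (\<lambda>i. (2*R)^(i+J) / fact (i+J))"
    using summable_expr[of "2*R"] by (subst summable_iff_shift)
  have "norm (\<Sum>i. g (i+J) * z^(i+J)) \<le> (\<Sum>i. (2*R)^(i+J) / fact (i+J))"
  proof (rule norm_suminf_le[OF _ sumb])
    fix i
    have "norm (g (i+J) * z^(i+J)) = norm (g (i+J)) * norm z ^ (i+J)" by (simp add: norm_mult norm_power)
    also have "\<dots> \<le> 2^(i+J) / fact (i+J) * R ^ (i+J)"
    proof (rule mult_mono)
      show "norm (g (i+J)) \<le> 2^(i+J) / fact (i+J)" using gz[of "i+J"] by auto
      show "norm z ^ (i+J) \<le> R ^ (i+J)" using z unfolding R_def by (intro power_mono) auto
    qed auto
    also have "\<dots> = (2*R)^(i+J) / fact (i+J)" by (simp add: power_mult_distrib)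
    finally show "norm (g (i+J) * z^(i+J)) \<le> (2*R)^(i+J) / fact (i+J)" .
  qed
  also have "\<dots> < epsk k" using tail_phi[of k] unfolding J_def R_def by (simp add: add.assoc)
  finally show ?thesis unfolding eq[symmetric] a_def .
qed



lemma openin_HC: "openin H_C = co_open"
  unfolding H_C_def by (rule topology_inverse'[OF istopology_co_open])

lemma co_open_entire: "co_open entire_fns"
  unfolding co_open_def by (auto intro!: exI[of _ "{}"] exI[of _ 1])

lemma density_pos: assumes sub: "AS k \<subseteq> S" shows "lower_density S > 0"
proof -
  obtain c M0 where c: "c > 0" "\<forall>M\<ge>M0. c * real M \<le> real (card {N\<in>AS k. 1 \<le> N \<and> N \<le> M})"
    using A_density[of phi k] by blast
  have "ereal c \<le> lower_density S"
    unfolding lower_density_def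
  proof (subst le_Liminf_iff, intro allI impI)
    fix y assume y: "y < ereal c"
    show "\<forall>\<^sub>F N in sequentially. y < ereal (real (card {n \<in> S. 1 \<le> n \<and> n \<le> N}) / real N)"
    proof (rule eventually_sequentiallyI[of "max M0 1"])
      fix M assume M: "max M0 1 \<le> M"
      have "card {N\<in>AS k. 1 \<le> N \<and> N \<le> M} \<le> card {n \<in> S. 1 \<le> n \<and> n \<le> M}"
        using sub by (intro card_mono) auto
      then have "c * real M \<le> real (card {n \<in> S. 1 \<le> n \<and> n \<le> M})" using c(2) M by force
      then have "c \<le> real (card {n \<in> S. 1 \<le> n \<and> n \<le> M}) / real M" using M by (simp add: le_divide_eq)
      then show "y < ereal (real (card {n \<in> S. 1 \<le> n \<and> n \<le> M}) / real M)"
        using y by (meson ereal_less_eq(3) less_le_trans)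
    qed
  qed
  moreover have "ereal 0 < ereal c" using c by simp
  ultimately show ?thesis by (metis zero_ereal_def less_le_trans)
qed

theorem proposition4p10:
  fixes \<mu> :: complex
  assumes "norm \<mu> \<ge> 1"
  shows "frequently_hypercyclic H_C (T_op \<mu>)"
  unfolding frequently_hypercyclic_def
proof (intro bexI allI impI)
  define x where "x = ps (coef \<mu>)"
  have allc: "allsum (coef \<mu>)" by (rule allsum_coef[OF assms])
  show "x \<in> topspace H_C"
    using openin_subset[of H_C entire_fns] co_open_entire ps_holo[OF allc] unfolding openin_HC x_def by auto
  fix U assume U: "openin H_C U \<and> U \<noteq> {}"
  then have cU: "co_open U" unfolding openin_HC by simp
  obtain f where f: "f \<in> U" using U by auto
  obtain K e where Ke: "compact K" "e > 0" "{g \<in> entire_fns. \<forall>z\<in>K. cmod (g z - f z) < e} \<subseteq> U"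
    using cU f unfolding co_open_def by blast
  have fe: "f holomorphic_on UNIV" using cU f unfolding co_open_def entire_fns_def by auto
  obtain Bd where Bd: "\<forall>z\<in>K. norm z \<le> Bd" using compact_imp_bounded[OF Ke(1)] bounded_iff by blast
  obtain m :: nat where m: "max Bd (2/e) \<le> real m" using real_arch_simple by blast
  obtain L where L: "\<forall>z. norm z \<le> real m \<longrightarrow> norm (f z - poly_of L z) < e/2"
    using approx[OF fe, of "e/2" "real m"] Ke(2) by auto
  define k where "k = to_nat (L, m)"
  have tk: "Lk k = L" "Rk k = m" unfolding Lk_def Rk_def tgt_def k_def by simp_all
  have epsl: "epsk k < e/2"
  proof -
    have "2/e < real m + 1" using m by linarith
    then have "2 < e * (real m + 1)" using Ke(2) by (simp add: divide_less_eq mult.commute)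
    then show ?thesis unfolding epsk_def tk using Ke(2) by (simp add: field_simps)
  qed
  have "AS k \<subseteq> {n. (T_op \<mu> ^^ n) x \<in> U}"
  proof
    fix N assume N: "N \<in> AS k"
    have it: "(T_op \<mu> ^^ N) x = ps (\<lambda>j. coef \<mu> (j+N) * W \<mu> j N)" "allsum (\<lambda>j. coef \<mu> (j+N) * W \<mu> j N)"
      using T_iter[OF allc, where \<mu>=\<mu> and N=N] unfolding x_def by auto
    have "(T_op \<mu> ^^ N) x \<in> {g \<in> entire_fns. \<forall>z\<in>K. cmod (g z - f z) < e}"
    proof (intro CollectI conjI ballI)
      show "(T_op \<mu> ^^ N) x \<in> entire_fns" unfolding it(1) by (rule ps_holo[OF it(2)])
      fix z assume z: "z \<in> K"
      have zm: "norm z \<le> real m" using Bd z m by force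
      have 1: "norm (ps (\<lambda>j. coef \<mu> (j+N) * W \<mu> j N) z - poly_of L z) < e/2"
        using tail[OF assms N, of z] zm epsl unfolding tk by simp
      have 2: "norm (f z - poly_of L z) < e/2" using L zm by blast
      have "cmod ((T_op \<mu> ^^ N) x z - f z) \<le> norm (ps (\<lambda>j. coef \<mu> (j+N) * W \<mu> j N) z - poly_of L z) + norm (f z - poly_of L z)"
        unfolding it(1) using norm_triangle_ineq4[of "ps (\<lambda>j. coef \<mu> (j+N) * W \<mu> j N) z - poly_of L z" "f z - poly_of L z"]
        by simp
      then show "cmod ((T_op \<mu> ^^ N) x z - f z) < e" using 1 2 by linarith
    qed
    then show "N \<in> {n. (T_op \<mu> ^^ n) x \<in> U}" using Ke(3) by blast
  qed
  then show "lower_density {n. (T_op \<mu> ^^ n) x \<in> U} > 0" by (rule density_pos)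
qed


end
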